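(* Let $\tilde R\le0$ and let the intervention set $\mathcal I$ be partial; write $\tilde V^*(d_0)=\sup_\pi\tilde V^\pi(d_0)$. (1) For any policy $\pi$, $\tilde V^*(d_0)\ge\tilde J^\pi_+$, where $\tilde J^\pi_+=\frac1{1-\gamma}\mathbb E_{(s,a)\sim\tilde d^\pi}[r(s,a)\mathbb 1\{(s,a)\in(\mathcal S_{\mathrm{safe}}\times\mathcal A)\setminus\mathcal I\}]$. (2) If $\tilde{\mathcal M}$ admits an optimal policy, then it admits an optimal policy $\tilde\pi^*$ with $\mathbb E_{(s,a)\sim\tilde d^{\tilde\pi^*}}[\mathbb 1\{(s,a)\in\mathcal I\}]=0$. (3) If $\tilde R<0$, every optimal policy $\tilde\pi^*$ of $\tilde{\mathcal M}$ satisfies $\mathbb E_{(s,a)\sim\tilde d^{\tilde\pi^*}}[\mathbb 1\{(s,a)\in\mathcal I\}]=0$.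
   Context: $\mathcal M=(\mathcal S,\mathcal A,P,r,\gamma)$ is a discounted MDP with discrete state and action spaces, reward $r(s,a)\in[0,1]$, discount $\gamma\in[0,1)$, initial distribution $d_0$. $\mathcal S$ contains two distinguished states $s_\triangleright,s_\circ$ forming $\mathcal S_{\mathrm{unsafe}}$; $\mathcal S_{\mathrm{safe}}=\mathcal S\setminus\mathcal S_{\mathrm{unsafe}}$; from $s_\triangleright$ every action leads to $s_\circ$, $s_\circ$ is absorbing, $r=0$ on $\mathcal S_{\mathrm{unsafe}}$. Policies are stationary. An intervention rule $\mathcal G=(\bar Q,\mu,\eta)$ (backup policy $\mu$, $\eta\in[0,1]$, $\bar Q:\mathcal S_{\mathrm{safe}}\times\mathcal A\to[0,1]$) has intervention set $\mathcal I=\{(s,a)\in\mathcal S_{\mathrm{safe}}\times\mathcal A:\bar Q(s,a)-\mathbb E_{a'\sim\mu(\cdot|s)}\bar Q(s,a')>\eta\}$; a set $\mathcal X\subseteq\mathcal S_{\mathrm{safe}}\times\mathcal A$ is partial if for every $(s,a)\in\mathcal X$ there is $a'$ with $(s,a')\notin\mathcal X$. The absorbing MDP $\tilde{\mathcal M}=(\mathcal S\cup\{s_\dagger\},\mathcal A,\tilde P,\tilde r,\gamma)$ has $\tilde r(s,a)=\tilde R$ if $(s,a)\in\mathcal I$, $\tilde r(s_\dagger,a)=0$, $\tilde r=r$ otherwise; $\tilde P(\cdot|s,a)$ is the point mass at $s_\dagger$ if $(s,a)\in\mathcal I$ or $s=s_\dagger$, else $P(\cdot|s,a)$. Policies are extended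 to $s_\dagger$ arbitrarily. $\tilde V^\pi(d_0)$ is the value of $\pi$ in $\tilde{\mathcal M}$ from $s_0\sim d_0$, $\tilde d^\pi(s,a)=(1-\gamma)\sum_t\gamma^t\Pr(s_t=s,a_t=a)$ in $\tilde{\mathcal M}$; a policy is optimal if it attains $\tilde V^*(d_0)$. *)

theory Defs
  imports "HOL-Probability.Probability"
begin

primrec sa_dist :: "('s \<Rightarrow> 'a \<Rightarrow> 's pmf) \<Rightarrow> ('s \<Rightarrow> 'a pmf) \<Rightarrow> 's pmf \<Rightarrow> nat \<Rightarrow> ('s \<times> 'a) pmf" where
  "sa_dist P pol d0 0 = bind_pmf d0 (\<lambda>s. map_pmf (\<lambda>a. (s, a)) (pol s))"
| "sa_dist P pol d0 (Suc t) =
     bind_pmf (sa_dist P pol d0 t) (\<lambda>(s, a). bind_pmf (P s a) (\<lambda>s'. map_pmf (\<lambda>a'. (s', a')) (pol s')))"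

definition mdp_value :: "('s \<Rightarrow> 'a \<Rightarrow> 's pmf) \<Rightarrow> ('s \<Rightarrow> 'a \<Rightarrow> real) \<Rightarrow> real \<Rightarrow> ('s \<Rightarrow> 'a pmf) \<Rightarrow> 's pmf \<Rightarrow> real" where
  "mdp_value P r \<gamma> pol d0 =
     (\<Sum>t. \<gamma> ^ t * measure_pmf.expectation (sa_dist P pol d0 t) (\<lambda>(s, a). r s a))"

definition occupancy :: "('s \<Rightarrow> 'a \<Rightarrow> 's pmf) \<Rightarrow> real \<Rightarrow> ('s \<Rightarrow> 'a pmf) \<Rightarrow> 's pmf \<Rightarrow> ('s \<times> 'a) \<Rightarrow> real" where
  "occupancy P \<gamma> pol d0 x = (1 - \<gamma>) * (\<Sum>t. \<gamma> ^ t * pmf (sa_dist P pol d0 t) x)"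

definition occ_expect :: "('s \<Rightarrow> 'a \<Rightarrow> 's pmf) \<Rightarrow> real \<Rightarrow> ('s \<Rightarrow> 'a pmf) \<Rightarrow> 's pmf \<Rightarrow> ('s \<times> 'a \<Rightarrow> real) \<Rightarrow> real" where
  "occ_expect P \<gamma> pol d0 f = infsum (\<lambda>x. occupancy P \<gamma> pol d0 x * f x) UNIV"

definition intervention_set :: "'s set \<Rightarrow> ('s \<Rightarrow> 'a \<Rightarrow> real) \<Rightarrow> ('s \<Rightarrow> 'a pmf) \<Rightarrow> real \<Rightarrow> ('s \<times> 'a) set" where
  "intervention_set Ssafe Qb mu \<eta> =
     {(s, a). s \<in> Ssafe \<and> Qb s a - measure_pmf.expectation (mu s) (\<lambda>a'. Qb s a') > \<eta>}"

definition partial_set :: "('s \<times> 'a) set \<Rightarrow> bool" where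
  "partial_set X \<longleftrightarrow> (\<forall>(s, a) \<in> X. \<exists>a'. (s, a') \<notin> X)"

text \<open>Absorbing MDP: state space 's option, None is the absorbing state s_dagger.\<close>
definition abs_P :: "('s \<Rightarrow> 'a \<Rightarrow> 's pmf) \<Rightarrow> ('s \<times> 'a) set \<Rightarrow> 's option \<Rightarrow> 'a \<Rightarrow> 's option pmf" where
  "abs_P P I so a = (case so of None \<Rightarrow> return_pmf None
      | Some s \<Rightarrow> if (s, a) \<in> I then return_pmf None else map_pmf Some (P s a))"

definition abs_r :: "('s \<Rightarrow> 'a \<Rightarrow> real) \<Rightarrow> ('s \<times> 'a) set \<Rightarrow> real \<Rightarrow> 's option \<Rightarrow> 'a \<Rightarrow> real" where
  "abs_r r I R so a = (case so of None \<Rightarrow> 0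
      | Some s \<Rightarrow> if (s, a) \<in> I then R else r s a)"

end

theory Submission imports Defs "HOL-Analysis.Infinite_Set_Sum" begin

lemma pmf_K:
  "pmf (bind_pmf m (\<lambda>s'. map_pmf (\<lambda>a'. (s', a')) (pol s'))) (y, a') = pmf m y * pmf (pol y) a'"
proof -
  have "pmf (map_pmf (\<lambda>a'. (s', a')) (pol s')) (y, a') = indicator {y} s' * pmf (pol y) a'" for s'
  proof (cases "s' = y")
    case True
    have "pmf (map_pmf (Pair y) (pol y)) (Pair y a') = pmf (pol y) a'"
      by (rule pmf_map_inj') (auto simp: inj_def)
    then show ?thesis using True by simp
  next
    case False
    then show ?thesis by (subst pmf_map_outside) auto
  qed
  then show ?thesis by (simp add: pmf_bind measure_pmf_single)
qed

lemma sa_dist_0_pmf: "pmf (sa_dist P pol d 0) (y,a') = pmf d y * pmf (pol y) a'"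
  by (simp add: pmf_K)

lemma sa_dist_Suc_pmf: "pmf (sa_dist P pol d (Suc t)) (y,a') =
   (\<integral>x. pmf (P (fst x) (snd x)) y \<partial>measure_pmf (sa_dist P pol d t)) * pmf (pol y) a'"
proof -
  have "pmf (sa_dist P pol d (Suc t)) (y,a') =
     (\<integral>x. pmf (P (fst x) (snd x)) y * pmf (pol y) a' \<partial>measure_pmf (sa_dist P pol d t))"
  proof -
    have "sa_dist P pol d (Suc t) = bind_pmf (sa_dist P pol d t) (\<lambda>x. bind_pmf (P (fst x) (snd x)) (\<lambda>s'. map_pmf (\<lambda>a'. (s', a')) (pol s')))"
      by (simp add: case_prod_beta')
    then show ?thesis by (simp only: pmf_bind[of "sa_dist P pol d t"] pmf_K)
  qed
  then show ?thesis by simp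
qed

lemma mono_exp:
  fixes p q :: "'b pmf" and F :: "'b \<Rightarrow> real"
  assumes F: "\<And>x. 0 \<le> F x" "\<And>x. F x \<le> B"
    and pq: "\<And>x. F x \<noteq> 0 \<Longrightarrow> pmf p x \<le> pmf q x"
  shows "measure_pmf.expectation p F \<le> measure_pmf.expectation q F"
proof -
  have int: "integrable (measure_pmf M) F" for M :: "'b pmf"
    by (rule measure_pmf.integrable_const_bound[where B=B]) (use F in \<open>auto intro: order.trans[OF _ F(2)]\<close>)
  have e: "ennreal (measure_pmf.expectation M F) = (\<integral>\<^sup>+ x. ennreal (pmf M x) * ennreal (F x) \<partial>count_space UNIV)" for M
    by (subst nn_integral_eq_integral[symmetric]) (auto simp: int F nn_integral_measure_pmf)
  have "(\<integral>\<^sup>+ x. ennreal (pmf p x) * ennreal (F x) \<partial>count_space UNIV) \<le> (\<integral>\<^sup>+ x. ennreal (pmf q x) * ennreal (F x) \<partial>count_space UNIV)"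
    by (rule nn_integral_mono) (metis ennreal_leI mult_zero_right ennreal_0 mult_right_mono zero_le pq)
  then have "ennreal (measure_pmf.expectation p F) \<le> ennreal (measure_pmf.expectation q F)" by (simp add: e)
  then show ?thesis
    by (subst (asm) ennreal_le_iff) (auto intro: integral_nonneg_AE simp: F)
qed

lemma dom_pmf:
  assumes G: "\<And>x a y a'. G (y,a') \<Longrightarrow> pmf (Pm x a) y \<noteq> 0 \<Longrightarrow> G (x,a)"
    and pol: "\<And>y a'. G (y,a') \<Longrightarrow> pmf (p1 y) a' \<le> pmf (p2 y) a'"
  shows "G z \<Longrightarrow> pmf (sa_dist Pm p1 d t) z \<le> pmf (sa_dist Pm p2 d t) z"
proof (induction t arbitrary: z)
  case 0
  obtain y a' where z: "z = (y,a')" by force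
  show ?case using 0 pol[of y a'] by (simp add: z sa_dist_0_pmf mult_left_mono del: sa_dist.simps)
next
  case (Suc t)
  obtain y a' where z: "z = (y,a')" by force
  have "(\<integral>x. pmf (Pm (fst x) (snd x)) y \<partial>measure_pmf (sa_dist Pm p1 d t))
      \<le> (\<integral>x. pmf (Pm (fst x) (snd x)) y \<partial>measure_pmf (sa_dist Pm p2 d t))"
  proof (rule mono_exp[where B=1])
    fix x :: "'a \<times> 'b"
    assume "pmf (Pm (fst x) (snd x)) y \<noteq> 0"
    then have "G x" using G[of y a' "fst x" "snd x"] Suc.prems z by simp
    then show "pmf (sa_dist Pm p1 d t) x \<le> pmf (sa_dist Pm p2 d t) x" by (rule Suc.IH)
  qed (auto simp: pmf_le_1)
  then show ?case using Suc.prems pol[of y a'] z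
    by (simp add: sa_dist_Suc_pmf mult_mono integral_nonneg_AE del: sa_dist.simps)
qed

lemma zero_pmf:
  assumes Z: "\<And>y a'. Z (y,a') \<Longrightarrow> pmf (p y) a' = 0"
  shows "Z z \<Longrightarrow> pmf (sa_dist Pm p d t) z = 0"
  using Z by (cases t; cases z) (auto simp: sa_dist_Suc_pmf sa_dist_0_pmf simp del: sa_dist.simps)

lemma summable_geom_bounded:
  fixes c :: "nat \<Rightarrow> real"
  assumes "\<And>t. \<bar>c t\<bar> \<le> B" "0 \<le> \<gamma>" "\<gamma> < 1"
  shows "summable (\<lambda>t. \<gamma> ^ t * c t)"
proof (rule summable_comparison_test')
  show "summable (\<lambda>t. B * \<gamma> ^ t)" using assms by (intro summable_mult summable_geometric) auto
  show "norm (\<gamma> ^ t * c t) \<le> B * \<gamma> ^ t" for t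
    using assms(1)[of t] assms(2) by (simp add: abs_mult mult.commute mult_right_mono)
qed

lemma exp_nn:
  fixes F :: "'b \<Rightarrow> real"
  assumes F: "\<And>x. 0 \<le> F x" "\<And>x. F x \<le> B"
  shows "ennreal (measure_pmf.expectation M F) = (\<integral>\<^sup>+ x. ennreal (pmf M x) * ennreal (F x) \<partial>count_space UNIV)"
proof -
  have int: "integrable (measure_pmf M) F"
    by (rule measure_pmf.integrable_const_bound[where B=B]) (use F in \<open>auto intro: order.trans[OF _ F(2)]\<close>)
  show ?thesis
    by (subst nn_integral_eq_integral[symmetric]) (auto simp: int F nn_integral_measure_pmf)
qed

lemma occ_fubini:
  fixes Pm :: "'s \<Rightarrow> 'a \<Rightarrow> 's pmf" and f :: "'s \<times> 'a \<Rightarrow> real"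
  assumes f: "\<And>x. 0 \<le> f x" "\<And>x. f x \<le> 1" and g: "0 \<le> \<gamma>" "\<gamma> < 1"
  shows "occ_expect Pm \<gamma> pol d f =
     (1 - \<gamma>) * (\<Sum>t. \<gamma> ^ t * measure_pmf.expectation (sa_dist Pm pol d t) f)"
proof -
  define p where "p t = sa_dist Pm pol d t" for t
  define e where "e t = measure_pmf.expectation (p t) f" for t
  define w where "w x = occupancy Pm \<gamma> pol d x * f x" for x
  have e01: "0 \<le> e t" "e t \<le> 1" for t
    unfolding e_def using f
    by (auto intro!: integral_nonneg_AE measure_pmf.integral_le_const measure_pmf.integrable_const_bound[where B=1])
  have sume: "summable (\<lambda>t. \<gamma> ^ t * e t)"
    by (rule summable_geom_bounded[where B=1]) (use e01 g in auto)
  have sump: "summable (\<lambda>t. \<gamma> ^ t * pmf (p t) x)" for x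
    by (rule summable_geom_bounded[where B=1]) (use g in \<open>auto simp: pmf_le_1\<close>)
  have wx: "ennreal (w x) = (\<Sum>t. ennreal ((1 - \<gamma>) * f x * (\<gamma> ^ t * pmf (p t) x)))" for x
  proof -
    have "w x = (\<Sum>t. (1 - \<gamma>) * f x * (\<gamma> ^ t * pmf (p t) x))"
      unfolding w_def occupancy_def p_def
      using suminf_mult[OF sump[of x, unfolded p_def], of "(1-\<gamma>) * f x"] by (simp add: algebra_simps)
    moreover have "(\<Sum>t. ennreal ((1 - \<gamma>) * f x * (\<gamma> ^ t * pmf (p t) x))) = ennreal (\<Sum>t. (1 - \<gamma>) * f x * (\<gamma> ^ t * pmf (p t) x))"
      by (rule suminf_ennreal2) (use f g sump in \<open>auto intro: summable_mult\<close>)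
    ultimately show ?thesis by simp
  qed
  have it: "(\<integral>\<^sup>+ x. ennreal ((1 - \<gamma>) * f x * (\<gamma> ^ t * pmf (p t) x)) \<partial>count_space UNIV)
      = ennreal ((1 - \<gamma>) * \<gamma> ^ t) * ennreal (e t)" for t
  proof -
    have "(\<integral>\<^sup>+ x. ennreal ((1 - \<gamma>) * f x * (\<gamma> ^ t * pmf (p t) x)) \<partial>count_space UNIV)
       = (\<integral>\<^sup>+ x. ennreal ((1 - \<gamma>) * \<gamma> ^ t) * (ennreal (pmf (p t) x) * ennreal (f x)) \<partial>count_space UNIV)"
      by (intro nn_integral_cong) (simp add: ennreal_mult'[symmetric] g f mult_ac)
    also have "\<dots> = ennreal ((1 - \<gamma>) * \<gamma> ^ t) * (\<integral>\<^sup>+ x. ennreal (pmf (p t) x) * ennreal (f x) \<partial>count_space UNIV)"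
      by (rule nn_integral_cmult) simp
    also have "\<dots> = ennreal ((1 - \<gamma>) * \<gamma> ^ t) * ennreal (e t)"
      unfolding e_def by (subst exp_nn[where B=1]) (use f in auto)
    finally show ?thesis .
  qed
  have "(\<integral>\<^sup>+ x. ennreal (w x) \<partial>count_space UNIV) = (\<Sum>t. ennreal ((1 - \<gamma>) * \<gamma> ^ t) * ennreal (e t))"
    by (simp add: wx nn_integral_suminf it)
  also have "\<dots> = (\<Sum>t. ennreal ((1 - \<gamma>) * (\<gamma> ^ t * e t)))"
    by (simp add: ennreal_mult'[symmetric] g e01 mult_ac)
  also have "\<dots> = ennreal ((1 - \<gamma>) * (\<Sum>t. \<gamma> ^ t * e t))"
    by (subst suminf_ennreal2) (use g e01 sume in \<open>auto intro: summable_mult simp: suminf_mult\<close>)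
  finally have nn: "(\<integral>\<^sup>+ x. ennreal (w x) \<partial>count_space UNIV) = ennreal ((1 - \<gamma>) * (\<Sum>t. \<gamma> ^ t * e t))" .
  have w0: "0 \<le> w x" for x
    unfolding w_def occupancy_def using g f(1)[of x] sump[of x, unfolded p_def]
    by (intro mult_nonneg_nonneg suminf_nonneg) auto
  have int: "integrable (count_space UNIV) w"
    by (rule integrableI_nn_integral_finite[OF _ _ nn]) (auto simp: w0)
  have val: "integral\<^sup>L (count_space UNIV) w = (1 - \<gamma>) * (\<Sum>t. \<gamma> ^ t * e t)"
  proof -
    have "ennreal (integral\<^sup>L (count_space UNIV) w) = ennreal ((1 - \<gamma>) * (\<Sum>t. \<gamma> ^ t * e t))"
      by (subst nn_integral_eq_integral[symmetric]) (auto simp: int w0 nn)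
    moreover have "0 \<le> (1 - \<gamma>) * (\<Sum>t. \<gamma> ^ t * e t)"
      using g e01 by (auto intro!: mult_nonneg_nonneg suminf_nonneg sume)
    moreover have "0 \<le> integral\<^sup>L (count_space UNIV) w" by (auto intro: integral_nonneg_AE w0)
    ultimately show ?thesis by simp
  qed
  have "occ_expect Pm \<gamma> pol d f = infsum w UNIV" unfolding occ_expect_def w_def ..
  also have "\<dots> = infsetsum w UNIV"
    by (rule infsetsum_infsum[symmetric]) (simp add: abs_summable_on_def int)
  also have "\<dots> = (1 - \<gamma>) * (\<Sum>t. \<gamma> ^ t * e t)" by (simp add: infsetsum_def val)
  finally show ?thesis unfolding e_def p_def .
qed

theorem mainTheorem16:
  fixes P :: "'s::countable \<Rightarrow> 'a::countable \<Rightarrow> 's pmf"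
    and r :: "'s \<Rightarrow> 'a \<Rightarrow> real"
    and \<gamma> :: real
    and d0 :: "'s pmf"
    and s_tri s_circ :: 's
    and Qb :: "'s \<Rightarrow> 'a \<Rightarrow> real"
    and mu :: "'s \<Rightarrow> 'a pmf"
    and \<eta> R :: real
  defines "Ssafe \<equiv> UNIV - {s_tri, s_circ}"
  defines "I \<equiv> intervention_set Ssafe Qb mu \<eta>"
  defines "Vt \<equiv> (\<lambda>pol. mdp_value (abs_P P I) (abs_r r I R) \<gamma> pol (map_pmf Some d0))"
  defines "Vstar \<equiv> (SUP pol. Vt pol)"
  defines "occE \<equiv> (\<lambda>pol f. occ_expect (abs_P P I) \<gamma> pol (map_pmf Some d0) f)"
  assumes r_range: "\<And>s a. 0 \<le> r s a \<and> r s a \<le> 1"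
    and gamma: "0 \<le> \<gamma>" "\<gamma> < 1"
    and unsafe_distinct: "s_tri \<noteq> s_circ"
    and tri_step: "\<And>a. P s_tri a = return_pmf s_circ"
    and circ_absorb: "\<And>a. P s_circ a = return_pmf s_circ"
    and r_unsafe: "\<And>a. r s_tri a = 0" "\<And>a. r s_circ a = 0"
    and Qb_range: "\<And>s a. s \<in> Ssafe \<Longrightarrow> 0 \<le> Qb s a \<and> Qb s a \<le> 1"
    and eta: "0 \<le> \<eta>" "\<eta> \<le> 1"
    and R_nonpos: "R \<le> 0"
    and partial: "partial_set I"
  shows "(\<forall>pol. Vstar \<ge> (1 / (1 - \<gamma>)) * occE pol (\<lambda>(so, a). case so of None \<Rightarrow> 0
                 | Some s \<Rightarrow> r s a * (if s \<in> Ssafe \<and> (s, a) \<notin> I then 1 else 0)))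
       \<and> ((\<exists>pol. Vt pol = Vstar) \<longrightarrow>
            (\<exists>pol. Vt pol = Vstar \<and> occE pol (\<lambda>(so, a). case so of None \<Rightarrow> 0
                 | Some s \<Rightarrow> if (s, a) \<in> I then 1 else 0) = 0))
       \<and> (R < 0 \<longrightarrow> (\<forall>pol. Vt pol = Vstar \<longrightarrow> occE pol (\<lambda>(so, a). case so of None \<Rightarrow> 0
                 | Some s \<Rightarrow> if (s, a) \<in> I then 1 else 0) = 0))"
proof -
  define Pt where "Pt = abs_P P I"
  define rt where "rt = abs_r r I R"
  define d where "d = map_pmf Some d0"
  define g :: "'s option \<times> 'a \<Rightarrow> real" where "g = (\<lambda>(so, a). case so of None \<Rightarrow> 0
                 | Some s \<Rightarrow> r s a * (if s \<in> Ssafe \<and> (s, a) \<notin> I then 1 else 0))"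
  define h :: "'s option \<times> 'a \<Rightarrow> real" where "h = (\<lambda>(so, a). case so of None \<Rightarrow> 0
                 | Some s \<Rightarrow> if (s, a) \<in> I then 1 else 0)"
  define E where "E pol t f = measure_pmf.expectation (sa_dist Pt pol d t) f" for pol t and f :: "'s option \<times> 'a \<Rightarrow> real"
  define A where "A pol = (\<Sum>t. \<gamma> ^ t * E pol t g)" for pol
  define H where "H pol = (\<Sum>t. \<gamma> ^ t * E pol t h)" for pol
  have g01: "0 \<le> g x" "g x \<le> 1" for x
    unfolding g_def using r_range by (auto split: option.splits prod.splits)
  have h01: "0 \<le> h x" "h x \<le> 1" for x
    unfolding h_def by (auto split: option.splits prod.splits)
  have rt_eq: "(case x of (so, a) \<Rightarrow> rt so a) = g x + R * h x" for x
  proof -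
    obtain so a where x: "x = (so, a)" by force
    show ?thesis
    proof (cases so)
      case (Some s)
      have "s \<notin> Ssafe \<Longrightarrow> r s a = 0" using r_unsafe by (auto simp: Ssafe_def)
      then show ?thesis using Some unfolding x rt_def g_def h_def abs_r_def
        by (auto simp: I_def intervention_set_def)
    qed (simp add: x rt_def g_def h_def abs_r_def)
  qed
  have intb: "integrable (measure_pmf M) f" if "\<And>x. 0 \<le> f x" "\<And>x. f x \<le> 1" for M and f :: "'s option \<times> 'a \<Rightarrow> real"
    by (rule measure_pmf.integrable_const_bound[where B=1]) (use that in \<open>auto intro: order.trans[OF _ that(2)]\<close>)
  have E01: "0 \<le> E pol t f" "E pol t f \<le> 1" if "\<And>x. 0 \<le> f x" "\<And>x. f x \<le> 1" for pol t f
    unfolding E_def using that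
    by (auto intro!: integral_nonneg_AE measure_pmf.integral_le_const intb)
  have sumg: "summable (\<lambda>t. \<gamma> ^ t * E pol t g)" for pol
    by (rule summable_geom_bounded[where c="\<lambda>t. E pol t g" and B=1]) (use E01[of g, OF g01] gamma in auto)
  have sumh: "summable (\<lambda>t. \<gamma> ^ t * E pol t h)" for pol
    by (rule summable_geom_bounded[where c="\<lambda>t. E pol t h" and B=1]) (use E01[of h, OF h01] gamma in auto)
  have H0: "0 \<le> H pol" for pol
    unfolding H_def using E01[of h, OF h01] gamma sumh by (intro suminf_nonneg) auto
  have Ert: "measure_pmf.expectation (sa_dist Pt pol d t) (\<lambda>(so, a). rt so a) = E pol t g + R * E pol t h" for pol t
  proof -
    have "measure_pmf.expectation (sa_dist Pt pol d t) (\<lambda>(so, a). rt so a)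
       = measure_pmf.expectation (sa_dist Pt pol d t) (\<lambda>x. g x + R * h x)"
      using rt_eq by (simp add: case_prod_beta')
    also have "\<dots> = E pol t g + R * E pol t h"
      unfolding E_def using intb[OF g01] intb[OF h01] by simp
    finally show ?thesis .
  qed
  have Vt_eq: "Vt pol = A pol + R * H pol" for pol
  proof -
    have "Vt pol = (\<Sum>t. \<gamma> ^ t * E pol t g + R * (\<gamma> ^ t * E pol t h))"
      unfolding Vt_def mdp_value_def Pt_def[symmetric] rt_def[symmetric] d_def[symmetric] Ert
      by (simp add: algebra_simps)
    also have "\<dots> = A pol + R * H pol"
      unfolding A_def H_def
      using suminf_add[OF sumg[of pol] summable_mult[OF sumh[of pol], of R]] suminf_mult[OF sumh[of pol], of R]
      by simp
    finally show ?thesis .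
  qed
  have occ_g: "occE pol g = (1 - \<gamma>) * A pol" for pol
    unfolding occE_def A_def E_def Pt_def d_def using g01 gamma by (rule occ_fubini)
  have occ_h: "occE pol h = (1 - \<gamma>) * H pol" for pol
    unfolding occE_def H_def E_def Pt_def d_def using h01 gamma by (rule occ_fubini)
  have A_le: "A pol \<le> 1 / (1 - \<gamma>)" for pol
  proof -
    have "A pol \<le> (\<Sum>t. \<gamma> ^ t)"
      unfolding A_def using E01[of g, OF g01] gamma sumg
      by (intro suminf_le) (auto intro: mult_left_le summable_geometric)
    also have "\<dots> = 1 / (1 - \<gamma>)" using gamma by (simp add: suminf_geometric)
    finally show ?thesis .
  qed
  have Vt_le_A: "Vt pol \<le> A pol" for pol
    using Vt_eq[of pol] H0[of pol] R_nonpos by (simp add: mult_nonpos_nonneg)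
  have bdd: "bdd_above (range Vt)"
    using Vt_le_A A_le by (intro bdd_aboveI2) (rule order.trans)
  have Vt_le: "Vt pol \<le> Vstar" for pol
    unfolding Vstar_def using bdd by (rule cSUP_upper2) auto
  define alt where "alt s = (SOME a'. (s, a') \<notin> I)" for s
  have alt: "(s, b) \<in> I \<Longrightarrow> (s, alt s) \<notin> I" for s b
    using partial unfolding partial_set_def alt_def by (metis (mono_tags, lifting) case_prodD someI_ex)
  define fx where "fx so b = (case so of None \<Rightarrow> b | Some s \<Rightarrow> if (s, b) \<in> I then alt s else b)" for so b
  define modp where "modp pol so = map_pmf (fx so) (pol so)" for pol :: "'s option \<Rightarrow> 'a pmf" and so
  have mod_ge: "pmf (pol (Some s)) a' \<le> pmf (modp pol (Some s)) a'" if "(s, a') \<notin> I" for pol s a'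
  proof -
    have "pmf (pol (Some s)) a' = measure (pol (Some s)) {a'}" by (simp add: measure_pmf_single)
    also have "\<dots> \<le> measure (pol (Some s)) (fx (Some s) -` {a'})"
      using that by (intro measure_pmf.finite_measure_mono) (auto simp: fx_def)
    finally show ?thesis by (simp add: modp_def pmf_map)
  qed
  have mod_zero: "pmf (modp pol (Some s)) a' = 0" if "(s, a') \<in> I" for pol s a'
  proof -
    have "fx (Some s) -` {a'} = {}" using that alt by (auto simp: fx_def split: if_splits)
    then show ?thesis by (simp add: modp_def pmf_map)
  qed
  have dom: "pmf (sa_dist Pt pol d t) z \<le> pmf (sa_dist Pt (modp pol) d t) z"
    if "\<exists>s. fst z = Some s \<and> (s, snd z) \<notin> I" for pol t z
  proof (rule dom_pmf[where G="\<lambda>z. \<exists>s. fst z = Some s \<and> (s, snd z) \<notin> I"])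
    show "\<exists>s. fst z = Some s \<and> (s, snd z) \<notin> I" by fact
  next
    fix x a y a'
    assume "\<exists>s. fst (y, a') = Some s \<and> (s, snd (y, a')) \<notin> I" "pmf (Pt x a) y \<noteq> 0"
    then show "\<exists>s. fst (x, a) = Some s \<and> (s, snd (x, a)) \<notin> I"
      by (auto simp: Pt_def abs_P_def split: option.splits if_splits)
  next
    fix y a'
    assume "\<exists>s. fst (y, a') = Some s \<and> (s, snd (y, a')) \<notin> I"
    then show "pmf (pol y) a' \<le> pmf (modp pol y) a'" using mod_ge by auto
  qed
  have zero: "pmf (sa_dist Pt (modp pol) d t) z = 0"
    if "\<exists>s. fst z = Some s \<and> (s, snd z) \<in> I" for pol t z
  proof (rule zero_pmf[where Z="\<lambda>z. \<exists>s. fst z = Some s \<and> (s, snd z) \<in> I"])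
    show "\<exists>s. fst z = Some s \<and> (s, snd z) \<in> I" by fact
  next
    fix y a'
    assume "\<exists>s. fst (y, a') = Some s \<and> (s, snd (y, a')) \<in> I"
    then show "pmf (modp pol y) a' = 0" using mod_zero by auto
  qed
  have Eg_mono: "E pol t g \<le> E (modp pol) t g" for pol t
    unfolding E_def
  proof (rule mono_exp[where B=1])
    fix x :: "'s option \<times> 'a"
    assume "g x \<noteq> 0"
    then have "\<exists>s. fst x = Some s \<and> (s, snd x) \<notin> I"
      by (auto simp: g_def split: option.splits prod.splits if_splits)
    then show "pmf (sa_dist Pt pol d t) x \<le> pmf (sa_dist Pt (modp pol) d t) x" by (rule dom)
  qed (use g01 in auto)
  have Eh0: "E (modp pol) t h = 0" for pol t
  proof -
    have "AE x in measure_pmf (sa_dist Pt (modp pol) d t). h x = 0"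
    proof (rule AE_pmfI)
      fix x assume "x \<in> set_pmf (sa_dist Pt (modp pol) d t)"
      then have "pmf (sa_dist Pt (modp pol) d t) x \<noteq> 0" by (simp add: set_pmf_iff)
      then have "\<not> (\<exists>s. fst x = Some s \<and> (s, snd x) \<in> I)" using zero by blast
      then show "h x = 0" by (auto simp: h_def split: option.splits prod.splits)
    qed
    then show ?thesis unfolding E_def by (simp add: integral_cong_AE)
  qed
  have H_mod: "H (modp pol) = 0" for pol unfolding H_def Eh0 by simp
  have A_mono: "A pol \<le> A (modp pol)" for pol
    unfolding A_def using sumg Eg_mono gamma by (intro suminf_le) (auto intro: mult_left_mono)
  have Vt_mod: "A pol \<le> Vt (modp pol)" for pol
    using A_mono[of pol] Vt_eq[of "modp pol"] H_mod by simp
  have part1: "Vstar \<ge> (1 / (1 - \<gamma>)) * occE pol g" for pol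
    using occ_g[of pol] gamma Vt_mod[of pol] Vt_le[of "modp pol"] by simp
  have part2: "\<exists>pol. Vt pol = Vstar \<and> occE pol h = 0" if "Vt pol0 = Vstar" for pol0
  proof (intro exI conjI)
    show "Vt (modp pol0) = Vstar"
      using Vt_le_A[of pol0] Vt_mod[of pol0] Vt_le[of "modp pol0"] that by simp
    show "occE (modp pol0) h = 0" using occ_h H_mod by simp
  qed
  have part3: "occE pol h = 0" if "R < 0" "Vt pol = Vstar" for pol
  proof (rule ccontr)
    assume "occE pol h \<noteq> 0"
    then have "H pol > 0" using occ_h[of pol] H0[of pol] by auto
    then have "Vt pol < A pol" using Vt_eq[of pol] that(1) by (simp add: mult_neg_pos)
    then have "Vt pol < Vstar" using Vt_mod[of pol] Vt_le[of "modp pol"] by simp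
    then show False using that(2) by simp
  qed
  show ?thesis
    using part1 part2 part3 unfolding g_def h_def by blast
qed

end
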